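(* Let $V:S^2\to\mathbb R$ be smooth and let $\nabla V$ denote the Euclidean gradient of some smooth extension of $V$ to a neighbourhood of $S^2$ in $\mathbb R^3$. A smooth curve $\vec n:[0,T]\to S^2$ is a quantum Riemannian cubic with obstacle avoidance (for the potential $V$) if it satisfies, for all $t\in[0,T]$, $$P(\vec n)\Big(\ddddot{\vec n}+2\|\dot{\vec n}\|^2\ddot{\vec n}+4(\dot{\vec n}\cdot\ddot{\vec n})\,\dot{\vec n}+\|\ddot{\vec n}\|^2\vec n+\nabla V(\vec n)\Big)=0 .$$
   Context: $S^2\subset\mathbb R^3$ is the unit sphere with the round metric (induced by the Euclidean inner product "$\cdot$"); $D_t$ denotes the Levi--Civita covariant derivative along a curve. For $\vec n\in S^2$, $P(\vec n)=I-\vec n\vec n^\top$ is the orthogonal projector of $\mathbb R^3$ onto $T_{\vec n}S^2$. For a smooth $V:S^2\to\mathbb R$, consider the action $$J[\vec n]=\int_0^T\Big[\tfrac12\|D_t\dot{\vec n}(t)\|^2+V(\vec n(t))\Big]dt .$$ A curve $\vec n:[0,T]\to S^2$ is called a quantum Riemannian cubic with obstacle avoidance if it is a critical point of $J$ under (smooth) variations that fix both $(\vec n(0),\dot{\vec n}(0))$ and $(\vec n(T),\dot{\vec n}(T))$. *)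

theory Defs
  imports "HOL-Analysis.Analysis"
begin

(* C^k regularity on a set U (meant for open U): continuous, and for k+1 additionally
   differentiable with all partial derivatives of class C^k *)
fun Ck_on :: "nat \<Rightarrow> 'a::euclidean_space set \<Rightarrow> ('a \<Rightarrow> 'b::real_normed_vector) \<Rightarrow> bool" where
  "Ck_on 0 U f = continuous_on U f"
| "Ck_on (Suc k) U f =
     (continuous_on U f \<and> (\<forall>x\<in>U. f differentiable (at x)) \<and>
      (\<forall>b\<in>Basis. Ck_on k U (\<lambda>x. frechet_derivative f (at x) b)))"

definition smooth_on :: "'a::euclidean_space set \<Rightarrow> ('a \<Rightarrow> 'b::real_normed_vector) \<Rightarrow> bool" where
  "smooth_on U f \<longleftrightarrow> (\<forall>k. Ck_on k U f)"

fun vderiv :: "real \<Rightarrow> nat \<Rightarrow> (real \<Rightarrow> 'a::real_normed_vector) \<Rightarrow> real \<Rightarrow> 'a" where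
  "vderiv T 0 f = f"
| "vderiv T (Suc k) f = (\<lambda>t. vector_derivative (vderiv T k f) (at t within {0..T}))"

definition smooth_curve :: "real \<Rightarrow> (real \<Rightarrow> 'a::real_normed_vector) \<Rightarrow> bool" where
  "smooth_curve T f \<longleftrightarrow>
     (\<forall>k. \<forall>t\<in>{0..T}. (vderiv T k f has_vector_derivative vderiv T (Suc k) f t) (at t within {0..T}))"

definition proj :: "real^3 \<Rightarrow> real^3 \<Rightarrow> real^3" where
  "proj n w = w - (n \<bullet> w) *\<^sub>R n"

(* the action J[n]; the covariant acceleration on S^2 is D_t n' = P(n) n'' *)
definition action :: "(real^3 \<Rightarrow> real) \<Rightarrow> real \<Rightarrow> (real \<Rightarrow> real^3) \<Rightarrow> real" where
  "action V T n = integral {0..T}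
     (\<lambda>t. (1/2) * (norm (proj (n t) (vderiv T 2 n t)))\<^sup>2 + V (n t))"

(* quantum Riemannian cubic with obstacle avoidance: a smooth curve on S^2 that is a
   critical point of J under all smooth variations fixing endpoints and endpoint velocities *)
definition qrc_oa :: "(real^3 \<Rightarrow> real) \<Rightarrow> real \<Rightarrow> (real \<Rightarrow> real^3) \<Rightarrow> bool" where
  "qrc_oa V T n \<longleftrightarrow>
     smooth_curve T n \<and> (\<forall>t\<in>{0..T}. n t \<in> sphere 0 1) \<and>
     (\<forall>(H :: real \<times> real \<Rightarrow> real^3) W e.
        open W \<and> e > 0 \<and> {-e<..<e} \<times> {0..T} \<subseteq> W \<and> smooth_on W H \<and>
        (\<forall>s\<in>{-e<..<e}. \<forall>t\<in>{0..T}. H (s, t) \<in> sphere 0 1) \<and>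
        (\<forall>t\<in>{0..T}. H (0, t) = n t) \<and>
        (\<forall>s\<in>{-e<..<e}. H (s, 0) = n 0 \<and> H (s, T) = n T \<and>
            vderiv T 1 (\<lambda>t. H (s, t)) 0 = vderiv T 1 n 0 \<and>
            vderiv T 1 (\<lambda>t. H (s, t)) T = vderiv T 1 n T)
        \<longrightarrow> ((\<lambda>s. action V T (\<lambda>t. H (s, t))) has_real_derivative 0) (at 0))"

end

theory Submission
  imports Defs
begin


definition ps :: "(real \<times> real \<Rightarrow> 'c::real_normed_vector) \<Rightarrow> real \<times> real \<Rightarrow> 'c" where
  "ps g x = frechet_derivative g (at x) (1,0)"
definition pt :: "(real \<times> real \<Rightarrow> 'c::real_normed_vector) \<Rightarrow> real \<times> real \<Rightarrow> 'c" where
  "pt g x = frechet_derivative g (at x) (0,1)"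

lemma Ck_cont: "Ck_on k U f \<Longrightarrow> continuous_on U f"
  by (cases k) auto

lemma smooth_cont: "smooth_on U f \<Longrightarrow> continuous_on U f"
  unfolding smooth_on_def using Ck_cont by blast

lemma smooth_diff: "smooth_on U f \<Longrightarrow> x \<in> U \<Longrightarrow> f differentiable (at x)"
  unfolding smooth_on_def by (metis Ck_on.simps(2))

lemma smooth_partial: "smooth_on U f \<Longrightarrow> b \<in> Basis \<Longrightarrow> smooth_on U (\<lambda>x. frechet_derivative f (at x) b)"
  unfolding smooth_on_def by (metis Ck_on.simps(2))

lemma smooth_ps: "smooth_on U (g::real\<times>real\<Rightarrow>'c::real_normed_vector) \<Longrightarrow> smooth_on U (ps g)"
  unfolding ps_def[abs_def] by (rule smooth_partial) (auto simp: Basis_prod_def)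

lemma smooth_pt: "smooth_on U (g::real\<times>real\<Rightarrow>'c::real_normed_vector) \<Longrightarrow> smooth_on U (pt g)"
  unfolding pt_def[abs_def] by (rule smooth_partial) (auto simp: Basis_prod_def)

lemma smooth_ptk: "smooth_on U (g::real\<times>real\<Rightarrow>'c::real_normed_vector) \<Longrightarrow> smooth_on U ((pt^^k) g)"
  by (induction k) (auto intro: smooth_pt)

lemma hvd_t:
  assumes "smooth_on W (g::real\<times>real\<Rightarrow>'c::real_normed_vector)" "(s,t) \<in> W"
  shows "((\<lambda>t. g (s,t)) has_vector_derivative pt g (s,t)) (at t)"
proof -
  let ?D = "frechet_derivative g (at (s,t))"
  have d: "(g has_derivative ?D) (at (s,t))"
    using smooth_diff[OF assms] frechet_derivative_works by blast
  have lin: "linear ?D" using d has_derivative_linear by blast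
  have p: "((\<lambda>\<tau>. (s,\<tau>)) has_derivative (\<lambda>h. (0,h))) (at t)"
    by (auto intro!: derivative_eq_intros)
  have "((\<lambda>\<tau>. g (s,\<tau>)) has_derivative (\<lambda>h. ?D (0,h))) (at t)"
    using diff_chain_at[OF p, of g ?D] d by (simp add: o_def)
  moreover have "(\<lambda>h. ?D (0,h)) = (\<lambda>h. h *\<^sub>R ?D (0,1))"
  proof
    fix h :: real
    have "?D (0,h) = ?D (h *\<^sub>R (0,1))" by simp
    also have "\<dots> = h *\<^sub>R ?D (0,1)" using lin linear_scale by blast
    finally show "?D (0,h) = h *\<^sub>R ?D (0,1)" .
  qed
  ultimately show ?thesis unfolding has_vector_derivative_def pt_def by simp
qed

lemma hvd_s:
  assumes "smooth_on W (g::real\<times>real\<Rightarrow>'c::real_normed_vector)" "(s,t) \<in> W"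
  shows "((\<lambda>s. g (s,t)) has_vector_derivative ps g (s,t)) (at s)"
proof -
  let ?D = "frechet_derivative g (at (s,t))"
  have d: "(g has_derivative ?D) (at (s,t))"
    using smooth_diff[OF assms] frechet_derivative_works by blast
  have lin: "linear ?D" using d has_derivative_linear by blast
  have p: "((\<lambda>\<sigma>. (\<sigma>,t)) has_derivative (\<lambda>h. (h,0))) (at s)"
    by (auto intro!: derivative_eq_intros)
  have "((\<lambda>\<sigma>. g (\<sigma>,t)) has_derivative (\<lambda>h. ?D (h,0))) (at s)"
    using diff_chain_at[OF p, of g ?D] d by (simp add: o_def)
  moreover have "(\<lambda>h. ?D (h,0)) = (\<lambda>h. h *\<^sub>R ?D (1,0))"
  proof
    fix h :: real
    have "?D (h,0) = ?D (h *\<^sub>R (1,0))" by simp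
    also have "\<dots> = h *\<^sub>R ?D (1,0)" using lin linear_scale by blast
    finally show "?D (h,0) = h *\<^sub>R ?D (1,0)" .
  qed
  ultimately show ?thesis unfolding has_vector_derivative_def ps_def by simp
qed

lemma hvd_inner:
  assumes "(f has_vector_derivative f') (at x within S)" "(g has_vector_derivative g') (at x within S)"
  shows "((\<lambda>x. f x \<bullet> g x) has_real_derivative (f' \<bullet> g x + f x \<bullet> g')) (at x within S)"
proof -
  have "((\<lambda>x. f x \<bullet> g x) has_derivative (\<lambda>h. f x \<bullet> (h *\<^sub>R g') + (h *\<^sub>R f') \<bullet> g x)) (at x within S)"
    using has_derivative_inner[OF assms[unfolded has_vector_derivative_def]] .
  moreover have "(\<lambda>h. f x \<bullet> (h *\<^sub>R g') + (h *\<^sub>R f') \<bullet> g x) = (*) (f' \<bullet> g x + f x \<bullet> g')"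
    by (auto simp: algebra_simps inner_commute)
  ultimately show ?thesis unfolding has_field_derivative_def by simp
qed

lemma hvd_grad:
  assumes "(V has_derivative (\<lambda>h. G \<bullet> h)) (at (c t))" "(c has_vector_derivative c') (at t within S)"
  shows "((\<lambda>t. V (c t)) has_real_derivative (G \<bullet> c')) (at t within S)"
proof -
  have "((V \<circ> c) has_derivative ((\<lambda>h. G \<bullet> h) \<circ> (\<lambda>h. h *\<^sub>R c'))) (at t within S)"
    using diff_chain_within[OF assms(2)[unfolded has_vector_derivative_def]] assms(1)
      has_derivative_at_withinI by blast
  moreover have "((\<lambda>h. G \<bullet> h) \<circ> (\<lambda>h. h *\<^sub>R c')) = (*) (G \<bullet> c')"
    by (auto simp: o_def)
  ultimately show ?thesis unfolding has_field_derivative_def by (simp add: o_def)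
qed




lemma box_in_open:
  assumes "open W" "(s0::real, t0::real) \<in> W"
  obtains d where "d > 0" "\<And>\<sigma> \<tau>. \<bar>\<sigma> - s0\<bar> \<le> d \<Longrightarrow> \<bar>\<tau> - t0\<bar> \<le> d \<Longrightarrow> (\<sigma>,\<tau>) \<in> W"
proof -
  obtain r where r: "r > 0" "ball (s0,t0) r \<subseteq> W" using assms open_contains_ball by blast
  show ?thesis
  proof (rule that[of "r/3"])
    show "r/3 > 0" using r by simp
    fix \<sigma> \<tau> :: real assume h: "\<bar>\<sigma> - s0\<bar> \<le> r/3" "\<bar>\<tau> - t0\<bar> \<le> r/3"
    have "dist (s0,t0) (\<sigma>,\<tau>) = sqrt ((dist s0 \<sigma>)\<^sup>2 + (dist t0 \<tau>)\<^sup>2)" by (simp add: dist_Pair_Pair)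
    also have "\<dots> \<le> \<bar>dist s0 \<sigma>\<bar> + \<bar>dist t0 \<tau>\<bar>" by (rule sqrt_sum_squares_le_sum_abs)
    also have "\<dots> < r" using h r by (simp add: dist_real_def abs_minus_commute)
    finally show "(\<sigma>,\<tau>) \<in> W" using r by auto
  qed
qed

lemma mixed_sym:
  fixes g :: "real\<times>real \<Rightarrow> 'c::euclidean_space"
  assumes sm: "smooth_on W g" and W: "open W" and x: "(s0,t0) \<in> W"
  shows "ps (pt g) (s0,t0) = pt (ps g) (s0,t0)"
proof -
  obtain d where d: "d > 0" "\<And>\<sigma> \<tau>. \<bar>\<sigma> - s0\<bar> \<le> d \<Longrightarrow> \<bar>\<tau> - t0\<bar> \<le> d \<Longrightarrow> (\<sigma>,\<tau>) \<in> W"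
    using box_in_open[OF W x] by blast
  define a where "a = t0 - d"
  define S where "S = {s0-d<..<s0+d}"
  define J where "J = {t0-d..t0+d}"
  have SJ: "\<And>\<sigma> \<tau>. \<sigma> \<in> S \<Longrightarrow> \<tau> \<in> J \<Longrightarrow> (\<sigma>,\<tau>) \<in> W"
    using d unfolding S_def J_def by (auto simp: abs_le_iff)
  have smt: "smooth_on W (pt g)" "smooth_on W (ps g)" "smooth_on W (ps (pt g))"
    using sm by (auto intro: smooth_pt smooth_ps)
  have ftc: "g (\<sigma>,\<tau>) - g (\<sigma>,a) = integral {a..\<tau>} (\<lambda>u. pt g (\<sigma>,u))" if "\<sigma> \<in> S" "\<tau> \<in> J" for \<sigma> \<tau>
  proof -
    have "((\<lambda>u. pt g (\<sigma>,u)) has_integral (g (\<sigma>,\<tau>) - g (\<sigma>,a))) {a..\<tau>}"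
    proof (rule fundamental_theorem_of_calculus)
      show "a \<le> \<tau>" using that d unfolding a_def J_def by auto
      fix u assume "u \<in> {a..\<tau>}"
      then have "u \<in> J" using that unfolding a_def J_def by auto
      then show "((\<lambda>u. g (\<sigma>,u)) has_vector_derivative pt g (\<sigma>,u)) (at u within {a..\<tau>})"
        using hvd_t[OF sm SJ[OF that(1)]] has_vector_derivative_at_within by blast
    qed
    then show ?thesis by (simp add: integral_unique)
  qed
  have contJ: "continuous_on (S \<times> J) (ps (pt g))"
    using smooth_cont[OF smt(3)] by (rule continuous_on_subset) (use SJ in auto)
  have s0S: "s0 \<in> S" using d unfolding S_def by auto
  have t0J: "t0 \<in> J" using d unfolding J_def by auto
  have step2: "ps g (s0,\<tau>) = ps g (s0,a) + integral {a..\<tau>} (\<lambda>u. ps (pt g) (s0,u))" if "\<tau> \<in> J" for \<tau>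
  proof -
    have aJ: "a \<in> J" using d unfolding a_def J_def by auto
    have sub: "{a..\<tau>} \<subseteq> J" using that unfolding a_def J_def by auto
    have L: "((\<lambda>\<sigma>. integral (cbox a \<tau>) (\<lambda>u. pt g (\<sigma>,u))) has_vector_derivative
              integral (cbox a \<tau>) (\<lambda>u. ps (pt g) (s0,u))) (at s0 within S)"
    proof (rule leibniz_rule_vector_derivative)
      fix \<sigma> u assume "\<sigma> \<in> S" "u \<in> cbox a \<tau>"
      then have "(\<sigma>,u) \<in> W" using SJ sub by auto
      then show "((\<lambda>\<sigma>. pt g (\<sigma>,u)) has_vector_derivative ps (pt g) (\<sigma>,u)) (at \<sigma> within S)"
        using hvd_s[OF smt(1)] has_vector_derivative_at_within by blast
    next
      fix \<sigma> assume "\<sigma> \<in> S"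
      have "continuous_on {a..\<tau>} (\<lambda>u. pt g (\<sigma>,u))"
        by (rule continuous_on_compose2[OF smooth_cont[OF smt(1)]]) (use SJ sub \<open>\<sigma> \<in> S\<close> in \<open>auto intro!: continuous_intros\<close>)
      then show "(\<lambda>u. pt g (\<sigma>,u)) integrable_on cbox a \<tau>"
        using integrable_continuous_real by auto
    next
      show "continuous_on (S \<times> cbox a \<tau>) (\<lambda>(x, t). ps (pt g) (x,t))"
      proof -
        have "S \<times> cbox a \<tau> \<subseteq> S \<times> J" using sub by auto
        then show ?thesis using continuous_on_subset[OF contJ] by (simp add: case_prod_unfold)
      qed
    qed (use s0S S_def in auto)
    then have L': "((\<lambda>\<sigma>. g (\<sigma>,a) + integral {a..\<tau>} (\<lambda>u. pt g (\<sigma>,u))) has_vector_derivative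
              ps g (s0,a) + integral {a..\<tau>} (\<lambda>u. ps (pt g) (s0,u))) (at s0)"
      using at_within_open[OF s0S] hvd_s[OF sm SJ[OF s0S aJ]] unfolding S_def
      by (auto intro!: has_vector_derivative_add)
    have L2: "((\<lambda>\<sigma>. g (\<sigma>,a) + integral {a..\<tau>} (\<lambda>u. pt g (\<sigma>,u))) has_vector_derivative ps g (s0,\<tau>)) (at s0)"
      by (rule has_vector_derivative_transform_within_open[OF hvd_s[OF sm SJ[OF s0S that]], of S])
         (use ftc that d in \<open>auto simp: S_def algebra_simps\<close>)
    show ?thesis using vector_derivative_unique_at[OF L2 L'] .
  qed
  have contI: "continuous_on J (\<lambda>u. ps (pt g) (s0,u))"
    by (rule continuous_on_compose2[OF smooth_cont[OF smt(3)]]) (use SJ s0S in \<open>auto intro!: continuous_intros\<close>)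
  have aJ': "J = {a..t0+d}" unfolding J_def a_def by simp
  have R1: "((\<lambda>\<tau>. ps g (s0,a) + integral {a..\<tau>} (\<lambda>u. ps (pt g) (s0,u))) has_vector_derivative
            ps (pt g) (s0,t0)) (at t0 within J)"
    using integral_has_vector_derivative[OF contI[unfolded aJ'] t0J[unfolded aJ']] unfolding aJ'
    by (auto intro!: derivative_eq_intros)
  have R2: "((\<lambda>\<tau>. ps g (s0,a) + integral {a..\<tau>} (\<lambda>u. ps (pt g) (s0,u))) has_vector_derivative
            pt (ps g) (s0,t0)) (at t0 within J)"
    by (rule has_vector_derivative_transform[OF t0J _ has_vector_derivative_at_within[OF hvd_t[OF smt(2) x]]])
       (use step2 in auto)
  show ?thesis
    by (rule vector_derivative_unique_within_closed_interval[of "t0-d" "t0+d" t0])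
       (use d t0J R1 R2 in \<open>auto simp: J_def\<close>)
qed




lemma vderiv_pt:
  fixes g :: "real\<times>real \<Rightarrow> 'c::euclidean_space"
  assumes sm: "smooth_on W g" and T: "T > 0" and inW: "\<forall>t\<in>{0..T}. (s,t) \<in> W"
    and fg: "\<forall>t\<in>{0..T}. f t = g (s,t)"
  shows "t \<in> {0..T} \<Longrightarrow> vderiv T k f t = (pt^^k) g (s,t)"
proof (induction k arbitrary: t)
  case 0
  then show ?case using fg by simp
next
  case (Suc k)
  have h: "((\<lambda>t. (pt^^k) g (s,t)) has_vector_derivative (pt^^Suc k) g (s,t)) (at t within {0..T})"
    using hvd_t[OF smooth_ptk[OF sm] inW[rule_format, OF Suc.prems]] has_vector_derivative_at_within by fastforce
  have h2: "(vderiv T k f has_vector_derivative (pt^^Suc k) g (s,t)) (at t within {0..T})"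
    by (rule has_vector_derivative_transform[OF Suc.prems _ h]) (use Suc.IH in auto)
  show ?case using vector_derivative_within_closed_interval[OF T Suc.prems h2] by simp
qed

lemma const_deriv_zero:
  fixes \<phi> :: "real \<Rightarrow> real"
  assumes T: "T > 0" and c: "\<forall>t\<in>{0..T}. \<phi> t = c" and t: "t \<in> {0..T}"
    and d: "(\<phi> has_real_derivative D) (at t within {0..T})"
  shows "D = 0"
proof -
  have "((\<lambda>_. c) has_vector_derivative D) (at t within {0..T})"
    by (rule has_vector_derivative_transform[OF t _ d[unfolded has_real_derivative_iff_has_vector_derivative]])
       (use c in auto)
  moreover have "((\<lambda>_. c) has_vector_derivative 0) (at t within {0..T})" by simp
  ultimately show ?thesis
    using vector_derivative_unique_within_closed_interval[of 0 T t "\<lambda>_. c" D 0] T t by auto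
qed

lemma pt_cong:
  assumes "open W" "x \<in> W" "\<And>y. y \<in> W \<Longrightarrow> f y = g y" "f differentiable (at x)"
  shows "pt f x = pt g x"
  unfolding pt_def using frechet_derivative_transform_within_open[OF assms(4,1,2,3)] by simp



lemma hvd_proj:
  fixes H H2 :: "real \<Rightarrow> 'a::real_inner"
  assumes dH: "(H has_vector_derivative Y) (at s within S)" and dH2: "(H2 has_vector_derivative Z) (at s within S)"
  shows "((\<lambda>s. H2 s - (H s \<bullet> H2 s) *\<^sub>R H s) has_vector_derivative Z - (Y \<bullet> H2 s + H s \<bullet> Z) *\<^sub>R H s - (H s \<bullet> H2 s) *\<^sub>R Y) (at s within S)"
  apply (rule has_vector_derivative_eq_rhs)
  apply (rule has_vector_derivative_diff)
  apply (rule dH2)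
  apply (rule has_vector_derivative_scaleR)
  apply (rule hvd_inner)
  apply (rule dH)
  apply (rule dH2)
  apply (rule dH)
  apply (simp add: algebra_simps)
  done


lemma key_alg:
  fixes x a b c d z0 z2 G :: "real^3"
  assumes xx: "x\<bullet>x = 1" and xa: "x\<bullet>a = 0" and ab: "a\<bullet>a + x\<bullet>b = 0" and zx: "z0\<bullet>x = 0"
    and EL: "proj x (d + (2 * (norm a)\<^sup>2) *\<^sub>R b + (4 * (a \<bullet> b)) *\<^sub>R a + ((norm b)\<^sup>2) *\<^sub>R x + G) = 0"
  shows "(b - (x\<bullet>b) *\<^sub>R x) \<bullet> (z2 - (z0\<bullet>b + x\<bullet>z2) *\<^sub>R x - (x\<bullet>b) *\<^sub>R z0) + G\<bullet>z0
       = (b + (a\<bullet>a) *\<^sub>R x) \<bullet> z2 - (d + (2*(b\<bullet>b + a\<bullet>c)) *\<^sub>R x + (4*(a\<bullet>b)) *\<^sub>R a + (a\<bullet>a) *\<^sub>R b) \<bullet> z0"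
proof -
  define Q where "Q = d + (2 * (norm a)\<^sup>2) *\<^sub>R b + (4 * (a \<bullet> b)) *\<^sub>R a + ((norm b)\<^sup>2) *\<^sub>R x + G"
  have "Q = (x \<bullet> Q) *\<^sub>R x" using EL unfolding proj_def Q_def[symmetric] by simp
  then have "Q \<bullet> z0 = (x \<bullet> Q) * (x \<bullet> z0)" by (metis inner_scaleR_left)
  then have Qz: "Q \<bullet> z0 = 0" using zx by (simp add: inner_commute)
  have xb: "x\<bullet>b = -(a\<bullet>a)" using ab by simp
  have Qz': "d\<bullet>z0 + 2*(a\<bullet>a)*(b\<bullet>z0) + 4*(a\<bullet>b)*(a\<bullet>z0) + G\<bullet>z0 = 0"
    using Qz zx unfolding Q_def
    by (simp add: inner_add_left inner_add_right power2_norm_eq_inner inner_commute algebra_simps)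
  show ?thesis
    using Qz' xb xx zx
    by (simp add: inner_add_left inner_add_right inner_diff_left inner_diff_right inner_commute algebra_simps)
qed



lemma sph_in: "(x::'a::real_inner) \<in> sphere 0 1 \<Longrightarrow> x \<bullet> x = 1"
  by (metis mem_sphere_0 power2_norm_eq_inner power_one)

lemma gradV_cont:
  fixes V :: "real^3 \<Rightarrow> real"
  assumes "smooth_on U V" "\<forall>x\<in>U. (V has_derivative (\<lambda>h. gradV x \<bullet> h)) (at x)"
  shows "continuous_on U gradV"
proof -
  have c1: "Ck_on 1 U V" using assms(1) unfolding smooth_on_def by blast
  have cb: "continuous_on U (\<lambda>x. gradV x \<bullet> b)" if b: "b \<in> Basis" for b
  proof -
    have "continuous_on U (\<lambda>x. frechet_derivative V (at x) b)"
      using c1 b by (simp add: Ck_on.simps)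
    moreover have "\<And>x. x \<in> U \<Longrightarrow> frechet_derivative V (at x) b = gradV x \<bullet> b"
      using assms(2) frechet_derivative_at by metis
    ultimately show ?thesis using continuous_on_cong by force
  qed
  have "continuous_on U (\<lambda>x. \<Sum>b\<in>Basis. (gradV x \<bullet> b) *\<^sub>R b)"
    by (intro continuous_intros cb)
  then show ?thesis by (simp add: euclidean_representation)
qed

lemma variation:
  fixes V :: "real^3 \<Rightarrow> real" and gradV :: "real^3 \<Rightarrow> real^3"
    and U :: "(real^3) set" and T :: real and n :: "real \<Rightarrow> real^3"
    and H :: "real \<times> real \<Rightarrow> real^3"
  assumes T: "T > 0"
    and "open U" and sU: "sphere 0 1 \<subseteq> U" and smV: "smooth_on U V"
    and gV: "\<forall>x\<in>U. (V has_derivative (\<lambda>h. gradV x \<bullet> h)) (at x)"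
    and "smooth_curve T n"
    and "\<forall>t\<in>{0..T}. n t \<in> sphere 0 1"
    and EL: "\<forall>t\<in>{0..T}. proj (n t)
           (vderiv T 4 n t + (2 * (norm (vderiv T 1 n t))\<^sup>2) *\<^sub>R vderiv T 2 n t
            + (4 * (vderiv T 1 n t \<bullet> vderiv T 2 n t)) *\<^sub>R vderiv T 1 n t
            + ((norm (vderiv T 2 n t))\<^sup>2) *\<^sub>R n t + gradV (n t)) = 0"
    and W: "open W" and e: "e > 0" and EW: "{-e<..<e} \<times> {0..T} \<subseteq> W" and smH: "smooth_on W H"
    and Hs: "\<forall>s\<in>{-e<..<e}. \<forall>t\<in>{0..T}. H (s, t) \<in> sphere 0 1"
    and H0: "\<forall>t\<in>{0..T}. H (0, t) = n t"
    and Hb: "\<forall>s\<in>{-e<..<e}. H (s, 0) = n 0 \<and> H (s, T) = n T \<and>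
            vderiv T 1 (\<lambda>t. H (s, t)) 0 = vderiv T 1 n 0 \<and>
            vderiv T 1 (\<lambda>t. H (s, t)) T = vderiv T 1 n T"
  shows "((\<lambda>s. action V T (\<lambda>t. H (s, t))) has_real_derivative 0) (at 0)"
proof -
  define E where "E = {-e<..<e}"
  define I where "I = {0..T}"
  have EI: "\<And>s t. s \<in> E \<Longrightarrow> t \<in> I \<Longrightarrow> (s,t) \<in> W" using EW unfolding E_def I_def by auto
  have E0: "0 \<in> E" using e unfolding E_def by auto
  have oE: "open E" unfolding E_def by simp
  have I0: "0 \<in> I" and IT: "T \<in> I" using T unfolding I_def by auto
  define N where "N k t = (pt^^k) H (0,t)" for k t
  define Y where "Y = ps H"
  define y where "y k t = (pt^^k) Y (0,t)" for k t
  have smY: "smooth_on W Y" unfolding Y_def using smH by (rule smooth_ps)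
  have Nd: "\<And>k t. t \<in> I \<Longrightarrow> (N k has_vector_derivative N (Suc k) t) (at t)"
    unfolding N_def using hvd_t[OF smooth_ptk[OF smH] EI[OF E0]] by simp
  have yd: "\<And>k t. t \<in> I \<Longrightarrow> (y k has_vector_derivative y (Suc k) t) (at t)"
    unfolding y_def using hvd_t[OF smooth_ptk[OF smY] EI[OF E0]] by simp
  have n_eq: "\<And>k t. t \<in> I \<Longrightarrow> vderiv T k n t = N k t"
    unfolding N_def using vderiv_pt[OF smH T, of 0 n] EI[OF E0] H0 unfolding I_def by auto
  have Hs_eq: "\<And>k s t. s \<in> E \<Longrightarrow> t \<in> I \<Longrightarrow> vderiv T k (\<lambda>t. H (s,t)) t = (pt^^k) H (s,t)"
    using vderiv_pt[OF smH T] EI unfolding I_def by auto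
  have sp0: "\<And>t. t \<in> I \<Longrightarrow> N 0 t \<bullet> N 0 t = 1"
    using Hs E0 unfolding N_def E_def I_def by (auto intro: sph_in)
  have sp1: "N 0 t \<bullet> N 1 t = 0" if t: "t \<in> I" for t
  proof -
    have "((\<lambda>t. N 0 t \<bullet> N 0 t) has_real_derivative (N 1 t \<bullet> N 0 t + N 0 t \<bullet> N 1 t)) (at t within I)"
      using has_field_derivative_at_within[OF hvd_inner[OF Nd[of t 0, OF t] Nd[of t 0, OF t]]] by simp
    then have "N 1 t \<bullet> N 0 t + N 0 t \<bullet> N 1 t = 0"
      using const_deriv_zero[OF T, of "\<lambda>t. N 0 t \<bullet> N 0 t" 1 t] sp0 t unfolding I_def by auto
    then show ?thesis by (simp add: inner_commute)
  qed
  have sp2: "N 1 t \<bullet> N 1 t + N 0 t \<bullet> N 2 t = 0" if t: "t \<in> I" for t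
  proof -
    have "((\<lambda>t. N 0 t \<bullet> N 1 t) has_real_derivative (N 1 t \<bullet> N 1 t + N 0 t \<bullet> N 2 t)) (at t within I)"
      using has_field_derivative_at_within[OF hvd_inner[OF Nd[of t 0, OF t] Nd[of t 1, OF t]]] by (simp add: numeral_2_eq_2)
    then show ?thesis
      using const_deriv_zero[OF T, of "\<lambda>t. N 0 t \<bullet> N 1 t" 0 t] sp1 t unfolding I_def by auto
  qed
  have yperp: "y 0 t \<bullet> N 0 t = 0" if t: "t \<in> I" for t
  proof -
    have "((\<lambda>s. H (s,t) \<bullet> H (s,t)) has_real_derivative (Y (0,t) \<bullet> H (0,t) + H (0,t) \<bullet> Y (0,t))) (at 0)"
      unfolding Y_def using hvd_inner[OF hvd_s[OF smH EI[OF E0 t]] hvd_s[OF smH EI[OF E0 t]]] by simp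
    moreover have "((\<lambda>s. H (s,t) \<bullet> H (s,t)) has_real_derivative 0) (at 0)"
      by (rule has_field_derivative_transform_within_open[of "\<lambda>_. 1" 0 0 E])
         (use oE E0 Hs t in \<open>auto simp: E_def I_def intro: sph_in\<close>)
    ultimately have "Y (0,t) \<bullet> H (0,t) + H (0,t) \<bullet> Y (0,t) = 0" using DERIV_unique by blast
    then show ?thesis unfolding y_def N_def by (simp add: inner_commute)
  qed
  have yb0: "y 0 t0 = 0" if t0: "t0 = 0 \<or> t0 = T" for t0
  proof -
    have t0I: "t0 \<in> I" using t0 I0 IT by auto
    have "((\<lambda>s. H (s,t0)) has_vector_derivative 0) (at 0)"
      by (rule has_vector_derivative_transform_within_open[of "\<lambda>_. H (0,t0)" 0 0 E])
         (use oE E0 Hb t0 in \<open>auto simp: E_def\<close>)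
    then show ?thesis unfolding y_def Y_def
      using vector_derivative_unique_at[OF hvd_s[OF smH EI[OF E0 t0I]]] by auto
  qed
  have yb1: "y 1 t0 = 0" if t0: "t0 = 0 \<or> t0 = T" for t0
  proof -
    have t0I: "t0 \<in> I" using t0 I0 IT by auto
    have "((\<lambda>s. pt H (s,t0)) has_vector_derivative 0) (at 0)"
    proof (rule has_vector_derivative_transform_within_open[of "\<lambda>_. pt H (0,t0)" 0 0 E])
      fix s assume s: "s \<in> E"
      have "pt H (s,t0) = vderiv T 1 (\<lambda>t. H (s,t)) t0" using Hs_eq[OF s t0I, of 1] by simp
      also have "\<dots> = vderiv T 1 n t0" using Hb s t0 unfolding E_def by auto
      also have "\<dots> = vderiv T 1 (\<lambda>t. H (0,t)) t0" using Hb E0 t0 unfolding E_def by auto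
      also have "\<dots> = pt H (0,t0)" using Hs_eq[OF E0 t0I, of 1] by simp
      finally show "pt H (0,t0) = pt H (s,t0)" by simp
    qed (use oE E0 in auto)
    then have "ps (pt H) (0,t0) = 0"
      using vector_derivative_unique_at[OF hvd_s[OF smooth_pt[OF smH] EI[OF E0 t0I]]] by auto
    then show ?thesis unfolding y_def Y_def using mixed_sym[OF smH W EI[OF E0 t0I]] by simp
  qed
  have y2: "ps (pt (pt H)) (0,t) = y 2 t" if t: "t \<in> I" for t
  proof -
    have "ps (pt (pt H)) (0,t) = pt (ps (pt H)) (0,t)"
      using mixed_sym[OF smooth_pt[OF smH] W EI[OF E0 t]] .
    also have "\<dots> = pt (pt (ps H)) (0,t)"
      by (rule pt_cong[OF W EI[OF E0 t]]) (use mixed_sym[OF smH W] smooth_diff[OF smooth_ps[OF smooth_pt[OF smH]]] EI[OF E0 t] in auto)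
    finally show ?thesis unfolding y_def Y_def by (simp add: numeral_2_eq_2)
  qed
  define H2 where "H2 = pt (pt H)"
  define H2s where "H2s = ps (pt (pt H))"
  have smH2: "smooth_on W H2" unfolding H2_def using smH by (intro smooth_pt)
  have smH2s: "smooth_on W H2s" unfolding H2s_def using smH by (intro smooth_pt smooth_ps)
  define p where "p z = H2 z - (H z \<bullet> H2 z) *\<^sub>R H z" for z
  define q where "q z = H2s z - (Y z \<bullet> H2 z + H z \<bullet> H2s z) *\<^sub>R H z - (H z \<bullet> H2 z) *\<^sub>R Y z" for z
  define Lf where "Lf z = 1/2 * (p z \<bullet> p z) + V (H z)" for z
  define Ls where "Ls z = p z \<bullet> q z + gradV (H z) \<bullet> Y z" for z
  have HU: "\<And>z. z \<in> E \<times> I \<Longrightarrow> H z \<in> U" using Hs sU unfolding E_def I_def by auto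
  have EIW: "E \<times> I \<subseteq> W" using EI by auto
  have cH: "continuous_on (E \<times> I) H" "continuous_on (E \<times> I) Y"
    "continuous_on (E \<times> I) H2" "continuous_on (E \<times> I) H2s"
    using smooth_cont[OF smH] smooth_cont[OF smY] smooth_cont[OF smH2] smooth_cont[OF smH2s] EIW
    by (auto intro: continuous_on_subset)
  have cG: "continuous_on (E \<times> I) (\<lambda>z. gradV (H z))"
    by (rule continuous_on_compose2[OF gradV_cont[OF smV gV] cH(1)]) (use HU in auto)
  have cV: "continuous_on (E \<times> I) (\<lambda>z. V (H z))"
    by (rule continuous_on_compose2[OF smooth_cont[OF smV] cH(1)]) (use HU in auto)
  have cLs: "continuous_on (E \<times> I) Ls"
    unfolding Ls_def p_def q_def using cH cG by (intro continuous_intros)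
  have cLf: "continuous_on (E \<times> I) Lf"
    unfolding Lf_def p_def using cH cV by (intro continuous_intros)
  have dLf: "((\<lambda>s. Lf (s,t)) has_field_derivative Ls (s,t)) (at s)" if s: "s \<in> E" and t: "t \<in> I" for s t
  proof -
    have z: "(s,t) \<in> W" using EI s t by auto
    have dH: "((\<lambda>s. H (s,t)) has_vector_derivative Y (s,t)) (at s)"
      unfolding Y_def using hvd_s[OF smH z] .
    have dH2: "((\<lambda>s. H2 (s,t)) has_vector_derivative H2s (s,t)) (at s)"
      unfolding H2s_def H2_def using hvd_s[OF smooth_pt[OF smooth_pt[OF smH]] z] .
    have dp: "((\<lambda>s. p (s,t)) has_vector_derivative q (s,t)) (at s)"
      unfolding p_def q_def using hvd_proj[OF dH dH2] .
    have dV: "((\<lambda>s. V (H (s,t))) has_real_derivative (gradV (H (s,t)) \<bullet> Y (s,t))) (at s)"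
      by (rule hvd_grad[OF _ dH]) (use gV HU s t in auto)
    show ?thesis unfolding Lf_def Ls_def
      using DERIV_add[OF DERIV_cmult[OF hvd_inner[OF dp dp], of "1/2"] dV]
      by (simp add: inner_commute algebra_simps)
  qed
  have act: "action V T (\<lambda>t. H (s,t)) = integral (cbox 0 T) (\<lambda>t. Lf (s,t))" if s: "s \<in> E" for s
    unfolding action_def cbox_interval
  proof (rule integral_cong)
    fix t assume t: "t \<in> {0..T}"
    have "vderiv T 2 (\<lambda>t. H (s,t)) t = H2 (s,t)"
      using Hs_eq[OF s, of t 2] t unfolding H2_def I_def by (simp add: numeral_2_eq_2)
    then show "1/2 * (norm (proj (H (s,t)) (vderiv T 2 (\<lambda>t. H (s,t)) t)))\<^sup>2 + V (H (s,t)) = Lf (s,t)"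
      unfolding Lf_def p_def proj_def by (simp add: power2_norm_eq_inner)
  qed
  have leib: "((\<lambda>s. integral (cbox 0 T) (\<lambda>t. Lf (s,t))) has_field_derivative integral (cbox 0 T) (\<lambda>t. Ls (0,t))) (at 0 within E)"
  proof (rule leibniz_rule_field_derivative)
    fix s t assume "s \<in> E" "t \<in> cbox 0 T"
    then show "((\<lambda>s. Lf (s,t)) has_field_derivative Ls (s,t)) (at s within E)"
      using dLf[of s t] has_field_derivative_at_within unfolding I_def by auto
  next
    fix s assume s: "s \<in> E"
    have "continuous_on I (\<lambda>t. Lf (s,t))"
      by (rule continuous_on_compose2[OF cLf]) (use s in \<open>auto intro!: continuous_intros\<close>)
    then show "(\<lambda>t. Lf (s,t)) integrable_on cbox 0 T"
      unfolding I_def using integrable_continuous_real by auto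
  next
    show "continuous_on (E \<times> cbox 0 T) (\<lambda>(s,t). Ls (s,t))"
      using cLs unfolding I_def by simp
  qed (use E0 in \<open>auto simp: E_def\<close>)
  then have leib2: "((\<lambda>s. integral (cbox 0 T) (\<lambda>t. Lf (s,t))) has_field_derivative integral (cbox 0 T) (\<lambda>t. Ls (0,t))) (at 0)"
    using at_within_open[OF E0 oE] by simp
  have dact: "((\<lambda>s. action V T (\<lambda>t. H (s, t))) has_real_derivative integral (cbox 0 T) (\<lambda>t. Ls (0,t))) (at 0)"
    by (rule has_field_derivative_transform_within_open[OF leib2 oE E0]) (use act in simp)
  define P where "P t = N 2 t + (N 1 t \<bullet> N 1 t) *\<^sub>R N 0 t" for t
  define P1 where "P1 t = N 3 t + (2*(N 1 t \<bullet> N 2 t)) *\<^sub>R N 0 t + (N 1 t \<bullet> N 1 t) *\<^sub>R N 1 t" for t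
  define P2 where "P2 t = N 4 t + (2*(N 2 t \<bullet> N 2 t + N 1 t \<bullet> N 3 t)) *\<^sub>R N 0 t
      + (4*(N 1 t \<bullet> N 2 t)) *\<^sub>R N 1 t + (N 1 t \<bullet> N 1 t) *\<^sub>R N 2 t" for t
  define B where "B t = P t \<bullet> y 1 t - P1 t \<bullet> y 0 t" for t
  define D where "D t = P t \<bullet> y 2 t - P2 t \<bullet> y 0 t" for t
  have dB: "(B has_real_derivative D t) (at t)" if t: "t \<in> I" for t
  proof -
    have N01: "(N 0 has_vector_derivative N 1 t) (at t)" using Nd[of t 0] t by simp
    have N12: "(N 1 has_vector_derivative N 2 t) (at t)" using Nd[of t 1] t by (simp add: numeral_2_eq_2)
    have s3: "Suc 2 = (3::nat)" and s4: "Suc 3 = (4::nat)" by simp_all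
    have N23: "(N 2 has_vector_derivative N 3 t) (at t)" using Nd[of t 2] t unfolding s3 by simp
    have N34: "(N 3 has_vector_derivative N 4 t) (at t)" using Nd[of t 3] t unfolding s4 by simp
    have y01: "(y 0 has_vector_derivative y 1 t) (at t)" using yd[of t 0] t by simp
    have y12: "(y 1 has_vector_derivative y 2 t) (at t)" using yd[of t 1] t by (simp add: numeral_2_eq_2)
    have dP: "((\<lambda>t. P t) has_vector_derivative P1 t) (at t)"
      unfolding P_def
      apply (rule has_vector_derivative_eq_rhs)
       apply (rule has_vector_derivative_add)
        apply (rule N23)
       apply (rule has_vector_derivative_scaleR)
        apply (rule hvd_inner)
         apply (rule N12)
        apply (rule N12)
       apply (rule N01)
      apply (simp add: P1_def algebra_simps inner_commute)
      done
    have dP1: "((\<lambda>t. P1 t) has_vector_derivative P2 t) (at t)"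
      unfolding P1_def
      apply (rule has_vector_derivative_eq_rhs)
       apply (rule has_vector_derivative_add)
        apply (rule has_vector_derivative_add)
         apply (rule N34)
        apply (rule has_vector_derivative_scaleR)
         apply (rule DERIV_cmult)
         apply (rule hvd_inner)
          apply (rule N12)
         apply (rule N23)
        apply (rule N01)
       apply (rule has_vector_derivative_scaleR)
        apply (rule hvd_inner)
         apply (rule N12)
        apply (rule N12)
       apply (rule N12)
      apply (simp add: P2_def inner_commute)
      apply (simp add: vec_eq_iff)
      done
    have "((\<lambda>t. P t \<bullet> y 1 t - P1 t \<bullet> y 0 t) has_real_derivative
        (P1 t \<bullet> y 1 t + P t \<bullet> y 2 t) - (P2 t \<bullet> y 0 t + P1 t \<bullet> y 1 t)) (at t)"
      by (rule DERIV_diff[OF hvd_inner[OF dP y12] hvd_inner[OF dP1 y01]])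
    then show ?thesis unfolding B_def[abs_def] D_def by simp
  qed
  have "(D has_integral (B T - B 0)) {0..T}"
    by (rule fundamental_theorem_of_calculus)
       (use T dB in \<open>auto simp: I_def has_real_derivative_iff_has_vector_derivative[symmetric]
          intro: has_field_derivative_at_within\<close>)
  moreover have "B T = 0" "B 0 = 0" unfolding B_def using yb0 yb1 by auto
  ultimately have intD: "integral I D = 0" unfolding I_def by (simp add: integral_unique)
  have key: "Ls (0,t) = D t" if t: "t \<in> I" for t
  proof -
    have e1: "H (0,t) = N 0 t" "H2 (0,t) = N 2 t" "Y (0,t) = y 0 t"
      unfolding N_def y_def H2_def by (auto simp: numeral_2_eq_2)
    have e2: "H2s (0,t) = y 2 t" using y2[OF t] unfolding H2s_def .
    have nt: "n t = N 0 t" using n_eq[OF t, of 0] by simp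
    have ELt: "proj (N 0 t) (N 4 t + (2 * (norm (N 1 t))\<^sup>2) *\<^sub>R N 2 t + (4 * (N 1 t \<bullet> N 2 t)) *\<^sub>R N 1 t
       + ((norm (N 2 t))\<^sup>2) *\<^sub>R N 0 t + gradV (N 0 t)) = 0"
    proof -
      have tt: "t \<in> {0..T}" using t unfolding I_def .
      show ?thesis using EL[rule_format, OF tt] unfolding n_eq[OF t] nt by simp
    qed
    have "Ls (0,t) = (N 2 t - (N 0 t \<bullet> N 2 t) *\<^sub>R N 0 t) \<bullet> (y 2 t - (y 0 t \<bullet> N 2 t + N 0 t \<bullet> y 2 t) *\<^sub>R N 0 t
        - (N 0 t \<bullet> N 2 t) *\<^sub>R y 0 t) + gradV (N 0 t) \<bullet> y 0 t"
      unfolding Ls_def p_def q_def e1 e2 ..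
    also have "\<dots> = D t" unfolding D_def P_def P2_def
      by (rule key_alg[OF sp0[OF t] sp1[OF t] sp2[OF t] yperp[OF t] ELt])
    finally show ?thesis .
  qed
  have "integral (cbox 0 T) (\<lambda>t. Ls (0,t)) = 0"
    using intD integral_cong[of I "\<lambda>t. Ls (0,t)" D] key unfolding I_def by simp
  then show ?thesis using dact by simp
qed


theorem mainTheorem2:
  fixes V :: "real^3 \<Rightarrow> real" and gradV :: "real^3 \<Rightarrow> real^3"
    and U :: "(real^3) set" and T :: real and n :: "real \<Rightarrow> real^3"
  assumes "T > 0"
    and "open U" and "sphere 0 1 \<subseteq> U" and "smooth_on U V"
    and "\<forall>x\<in>U. (V has_derivative (\<lambda>h. gradV x \<bullet> h)) (at x)"
    and "smooth_curve T n"
    and "\<forall>t\<in>{0..T}. n t \<in> sphere 0 1"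
    and "\<forall>t\<in>{0..T}. proj (n t)
           (vderiv T 4 n t + (2 * (norm (vderiv T 1 n t))\<^sup>2) *\<^sub>R vderiv T 2 n t
            + (4 * (vderiv T 1 n t \<bullet> vderiv T 2 n t)) *\<^sub>R vderiv T 1 n t
            + ((norm (vderiv T 2 n t))\<^sup>2) *\<^sub>R n t + gradV (n t)) = 0"
  shows "qrc_oa V T n"
  unfolding qrc_oa_def
proof (intro conjI allI impI)
  show "smooth_curve T n" by fact
  show "\<forall>t\<in>{0..T}. n t \<in> sphere 0 1" by fact
  fix H :: "real \<times> real \<Rightarrow> real^3" and W e
  assume h: "open W \<and> e > 0 \<and> {-e<..<e} \<times> {0..T} \<subseteq> W \<and> smooth_on W H \<and>
        (\<forall>s\<in>{-e<..<e}. \<forall>t\<in>{0..T}. H (s, t) \<in> sphere 0 1) \<and>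
        (\<forall>t\<in>{0..T}. H (0, t) = n t) \<and>
        (\<forall>s\<in>{-e<..<e}. H (s, 0) = n 0 \<and> H (s, T) = n T \<and>
            vderiv T 1 (\<lambda>t. H (s, t)) 0 = vderiv T 1 n 0 \<and>
            vderiv T 1 (\<lambda>t. H (s, t)) T = vderiv T 1 n T)"
  show "((\<lambda>s. action V T (\<lambda>t. H (s, t))) has_real_derivative 0) (at 0)"
    by (rule variation[OF assms]) (use h in auto)
qed

end
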